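(* Let $n\ge 2$ and let $T_1,\dots,T_{n-1}$ and $D_1,\dots,D_n$ be the Demazure–Lustig operators and the $q$-Dunkl operators described in the context. Then for $1\le i\le n-1$, $$T_i\,D_{i+1}=t\,D_i\,T_i^{-1},\qquad T_i\,D_i=D_{i+1}\,T_i+(t-1)D_i,$$ and for all $1\le i\le n-1$ and $1\le j\le n$ with $j\ne i,i+1$, $T_iD_j=D_jT_i$.
   Context: Let $n\ge1$, let $q,t$ be generic parameters (indeterminates), and let operators act on Laurent polynomials in $x=(x_1,\dots,x_n)$ with coefficients in $\mathbb{Q}(q,t)$; $x_i$ also denotes multiplication by $x_i$. Let $s_i$ ($1\le i\le n-1$) interchange $x_i$ and $x_{i+1}$, and let $\tau_i$ be the $q$-shift $(\tau_if)(x_1,\dots,x_n)=f(x_1,\dots,qx_i,\dots,x_n)$. The Demazure–Lustig operators are $T_i=t+\frac{tx_i-x_{i+1}}{x_i-x_{i+1}}(s_i-1)$, $1\le i\le n-1$; they satisfy $(T_i-t)(T_i+1)=0$, hence are invertible with $T_i^{-1}=t^{-1}-1+t^{-1}T_i$. Let $\omega=s_{n-1}\cdots s_2s_1\tau_1$ (composition of operators), and for $1\le i\le n$ let $Y_i=t^{-n+i}\,T_i\cdots T_{n-1}\,\omega\,T_1^{-1}\cdots T_{i-1}^{-1}$. For $i<j$ let $T_{ij}^{-1}=T_i^{-1}T_{i+1}^{-1}\cdots T_{j-2}^{-1}T_{j-1}^{-1}T_{j-2}^{-1}\cdots T_i^{-1}$. The $q$-Dunkl operators are $$D_i=x_i^{-1}\Bigl(1-t^{n-1}\Bigl[1+(t^{-1}-1)\sum_{j=i+1}^n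 t^{j-i}T_{ij}^{-1}\Bigr]Y_i\Bigr),\qquad 1\le i\le n,$$ so in particular $D_n=x_n^{-1}(1-t^{n-1}Y_n)$. *)

theory Defs
  imports "HOL-Library.Poly_Mapping" "HOL-Computational_Algebra.Polynomial"
    "HOL-Computational_Algebra.Fraction_Field"
begin

text \<open>Coefficient field Q(q,t): fraction field of Q[q][t].  The inner polynomial
  variable is q, the outer one is t; both are algebraically independent indeterminates.\<close>
type_synonym qt = "rat poly poly fract"

definition qq :: qt where "qq = Fract [:[:0, 1:]:] 1"
definition tt :: qt where "tt = Fract [:0, 1:] 1"

text \<open>Laurent polynomials: finitely supported maps from integer exponent vectors
  (variable index \<Rightarrow> exponent, variables indexed 1,2,...) to coefficients.\<close>
type_synonym lp = "(nat \<Rightarrow>\<^sub>0 int) \<Rightarrow>\<^sub>0 qt"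

definition const :: "qt \<Rightarrow> lp" where "const c = Poly_Mapping.single 0 c"

definition xvar :: "nat \<Rightarrow> lp" where
  "xvar i = Poly_Mapping.single (Poly_Mapping.single i 1) 1"

definition xinv :: "nat \<Rightarrow> lp" where
  "xinv i = Poly_Mapping.single (Poly_Mapping.single i (-1)) 1"

definition laurent_in :: "nat \<Rightarrow> lp set" where
  "laurent_in n = {f. \<forall>m \<in> Poly_Mapping.keys f. Poly_Mapping.keys m \<subseteq> {1..n}}"

definition swap_exp :: "nat \<Rightarrow> (nat \<Rightarrow>\<^sub>0 int) \<Rightarrow> (nat \<Rightarrow>\<^sub>0 int)" where
  "swap_exp i m = m - Poly_Mapping.single i (Poly_Mapping.lookup m i) - Poly_Mapping.single (Suc i) (Poly_Mapping.lookup m (Suc i))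
     + Poly_Mapping.single i (Poly_Mapping.lookup m (Suc i)) + Poly_Mapping.single (Suc i) (Poly_Mapping.lookup m i)"

definition s_op :: "nat \<Rightarrow> lp \<Rightarrow> lp" where
  "s_op i f = (\<Sum>m\<in>Poly_Mapping.keys f. Poly_Mapping.single (swap_exp i m) (Poly_Mapping.lookup f m))"

definition tau_op :: "nat \<Rightarrow> lp \<Rightarrow> lp" where
  "tau_op i f = (\<Sum>m\<in>Poly_Mapping.keys f. Poly_Mapping.single m (qq powi (Poly_Mapping.lookup m i) * Poly_Mapping.lookup f m))"

text \<open>Demazure--Lustig operator T_i = t + (t x_i - x_{i+1})/(x_i - x_{i+1}) (s_i - 1);
  the division is exact in the Laurent polynomial ring.\<close>
definition T_op :: "nat \<Rightarrow> lp \<Rightarrow> lp" where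
  "T_op i f = const tt * f +
     (THE g. (xvar i - xvar (Suc i)) * g = (const tt * xvar i - xvar (Suc i)) * (s_op i f - f))"

definition Tinv_op :: "nat \<Rightarrow> lp \<Rightarrow> lp" where
  "Tinv_op i f = const (inverse tt - 1) * f + const (inverse tt) * T_op i f"

text \<open>omega = s_{n-1} ... s_2 s_1 tau_1 (tau_1 applied first).\<close>
definition omega_op :: "nat \<Rightarrow> lp \<Rightarrow> lp" where
  "omega_op n f = fold s_op [1..<n] (tau_op 1 f)"

definition Y_op :: "nat \<Rightarrow> nat \<Rightarrow> lp \<Rightarrow> lp" where
  "Y_op n i f = const (tt powi (int i - int n)) *
      foldr T_op [i..<n] (omega_op n (foldr Tinv_op [1..<i] f))"

definition Tij_inv :: "nat \<Rightarrow> nat \<Rightarrow> lp \<Rightarrow> lp" where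
  "Tij_inv i j f = foldr Tinv_op ([i..<j] @ rev [i..<j - 1]) f"

definition D_op :: "nat \<Rightarrow> nat \<Rightarrow> lp \<Rightarrow> lp" where
  "D_op n i f = xinv i * (f - const (tt ^ (n - 1)) *
      (Y_op n i f + const (inverse tt - 1) *
         (\<Sum>j = i + 1..n. const (tt ^ (j - i)) * Tij_inv i j (Y_op n i f))))"

end

theory Submission
  imports Defs "HOL-Computational_Algebra.Fraction_Field"
begin

lemma lp_expand: "(\<Sum>k\<in>Poly_Mapping.keys f. Poly_Mapping.single k (Poly_Mapping.lookup f k)) = (f::lp)"
proof (rule poly_mapping_eqI)
  fix m
  have "Poly_Mapping.lookup (\<Sum>k\<in>Poly_Mapping.keys f. Poly_Mapping.single k (Poly_Mapping.lookup f k)) m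
      = (\<Sum>k\<in>Poly_Mapping.keys f. (if k = m then Poly_Mapping.lookup f k else 0))"
    by (simp add: lookup_sum lookup_single when_def eq_commute)
  also have "\<dots> = Poly_Mapping.lookup f m"
    by (simp add: sum.delta not_in_keys_iff_lookup_eq_zero)
  finally show "Poly_Mapping.lookup (\<Sum>k\<in>Poly_Mapping.keys f. Poly_Mapping.single k (Poly_Mapping.lookup f k)) m = Poly_Mapping.lookup f m" .
qed

definition mmap :: "((nat \<Rightarrow>\<^sub>0 int) \<Rightarrow> (nat \<Rightarrow>\<^sub>0 int)) \<Rightarrow> ((nat \<Rightarrow>\<^sub>0 int) \<Rightarrow> qt) \<Rightarrow> lp \<Rightarrow> lp" where
  "mmap \<sigma> w f = (\<Sum>k\<in>Poly_Mapping.keys f. Poly_Mapping.single (\<sigma> k) (w k * Poly_Mapping.lookup f k))"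

lemma mmap_superset:
  assumes "finite A" "Poly_Mapping.keys f \<subseteq> A"
  shows "mmap \<sigma> w f = (\<Sum>k\<in>A. Poly_Mapping.single (\<sigma> k) (w k * Poly_Mapping.lookup f k))"
  unfolding mmap_def
  by (rule sum.mono_neutral_left) (use assms in \<open>auto simp: not_in_keys_iff_lookup_eq_zero\<close>)

lemma mmap_add: "mmap \<sigma> w (f + g) = mmap \<sigma> w f + mmap \<sigma> w g"
proof -
  let ?A = "Poly_Mapping.keys f \<union> Poly_Mapping.keys g"
  have "mmap \<sigma> w (f + g) = (\<Sum>k\<in>?A. Poly_Mapping.single (\<sigma> k) (w k * Poly_Mapping.lookup (f+g) k))"
    using keys_add[of f g] by (intro mmap_superset) auto
  also have "\<dots> = (\<Sum>k\<in>?A. Poly_Mapping.single (\<sigma> k) (w k * Poly_Mapping.lookup f k))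
       + (\<Sum>k\<in>?A. Poly_Mapping.single (\<sigma> k) (w k * Poly_Mapping.lookup g k))"
    by (simp add: lookup_add distrib_left single_add sum.distrib)
  also have "\<dots> = mmap \<sigma> w f + mmap \<sigma> w g"
    by (simp add: mmap_superset[symmetric])
  finally show ?thesis .
qed

lemma mmap_zero[simp]: "mmap \<sigma> w 0 = 0"
  by (simp add: mmap_def)

lemma mmap_single: "mmap \<sigma> w (Poly_Mapping.single k c) = Poly_Mapping.single (\<sigma> k) (w k * c)"
  by (simp add: mmap_def)

lemma mmap_sum: "mmap \<sigma> w (sum F A) = (\<Sum>a\<in>A. mmap \<sigma> w (F a))"
  by (induction A rule: infinite_finite_induct) (auto simp: mmap_add)

lemma mmap_uminus: "mmap \<sigma> w (- f) = - mmap \<sigma> w f"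
  using mmap_add[of \<sigma> w f "-f"] by (simp add: eq_neg_iff_add_eq_0 add.commute)

lemma mmap_diff: "mmap \<sigma> w (f - g) = mmap \<sigma> w f - mmap \<sigma> w g"
  using mmap_add[of \<sigma> w f "-g"] by (simp add: mmap_uminus)

lemma mmap_mult:
  assumes sa: "\<And>a b. \<sigma> (a + b) = \<sigma> a + \<sigma> b" and wm: "\<And>a b. w (a + b) = w a * w b"
  shows "mmap \<sigma> w (f * g) = mmap \<sigma> w f * mmap \<sigma> w g"
proof -
  let ?F = "Poly_Mapping.keys f" and ?G = "Poly_Mapping.keys g"
  have "f * g = (\<Sum>a\<in>?F. Poly_Mapping.single a (Poly_Mapping.lookup f a)) * (\<Sum>b\<in>?G. Poly_Mapping.single b (Poly_Mapping.lookup g b))"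
    by (simp add: lp_expand)
  also have "\<dots> = (\<Sum>a\<in>?F. \<Sum>b\<in>?G. Poly_Mapping.single (a + b) (Poly_Mapping.lookup f a * Poly_Mapping.lookup g b))"
    apply (simp add: sum_distrib_left sum_distrib_right mult_single)
    by (rule sum.swap)
  finally have "mmap \<sigma> w (f * g) = (\<Sum>a\<in>?F. \<Sum>b\<in>?G. Poly_Mapping.single (\<sigma> a + \<sigma> b) (w a * w b * (Poly_Mapping.lookup f a * Poly_Mapping.lookup g b)))"
    by (simp add: mmap_sum mmap_single sa wm)
  also have "\<dots> = (\<Sum>a\<in>?F. Poly_Mapping.single (\<sigma> a) (w a * Poly_Mapping.lookup f a)) * (\<Sum>b\<in>?G. Poly_Mapping.single (\<sigma> b) (w b * Poly_Mapping.lookup g b))"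
    by (simp add: sum_product mult_single mult_ac)
  finally show ?thesis by (simp add: mmap_def)
qed

lemma mmap_one:
  assumes "\<sigma> 0 = 0" "w 0 = 1" shows "mmap \<sigma> w 1 = 1"
  using mmap_single[of \<sigma> w 0 1] assms by (simp add: one_poly_mapping.abs_eq single.abs_eq)


lemma qq_nz: "qq \<noteq> 0"
  unfolding qq_def by (subst Zero_fract_def) (simp add: eq_fract)

lemma tt_nz: "tt \<noteq> 0"
  unfolding tt_def by (subst Zero_fract_def) (simp add: eq_fract)

lemma const_add: "const (a + b) = const a + const b"
  by (simp add: const_def single_add)
lemma const_mult: "const (a * b) = const a * const b"
  by (simp add: const_def mult_single)
lemma const_diff: "const (a - b) = const a - const b"
  by (simp add: const_def single_diff)
lemma const_one[simp]: "const 1 = 1"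
  by (simp add: const_def)
lemma const_zero[simp]: "const 0 = 0"
  by (simp add: const_def)
lemma const_inj: "const a = const b \<longleftrightarrow> a = b"
  by (metis const_def lookup_single_eq)

definition tr :: "nat \<Rightarrow> nat \<Rightarrow> nat" where
  "tr i j = (if j = i then Suc i else if j = Suc i then i else j)"

lemma tr_tr[simp]: "tr i (tr i j) = j"
  by (simp add: tr_def)

lemma lookup_swap: "Poly_Mapping.lookup (swap_exp i m) j = Poly_Mapping.lookup m (tr i j)"
  by (simp add: swap_exp_def lookup_add lookup_minus lookup_single when_def tr_def)

lemma swap_add: "swap_exp i (a + b) = swap_exp i a + swap_exp i b"
  by (rule poly_mapping_eqI) (simp add: lookup_swap lookup_add)

lemma swap_zero[simp]: "swap_exp i 0 = 0"
  by (rule poly_mapping_eqI) (simp add: lookup_swap)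

lemma swap_swap[simp]: "swap_exp i (swap_exp i m) = m"
  by (rule poly_mapping_eqI) (simp add: lookup_swap)

lemma swap_single: "swap_exp i (Poly_Mapping.single j c) = Poly_Mapping.single (tr i j) c"
  by (rule poly_mapping_eqI) (auto simp: lookup_swap lookup_single when_def tr_def)

lemma s_mmap: "s_op i = mmap (swap_exp i) (\<lambda>_. 1)"
  by (rule ext) (simp add: s_op_def mmap_def)

lemma lookup_s: "Poly_Mapping.lookup (s_op i f) m = Poly_Mapping.lookup f (swap_exp i m)"
proof -
  have "Poly_Mapping.lookup (s_op i f) m = (\<Sum>k\<in>Poly_Mapping.keys f. if k = swap_exp i m then Poly_Mapping.lookup f k else 0)"
    unfolding s_op_def lookup_sum lookup_single when_def
    by (rule sum.cong) (auto)
  also have "\<dots> = Poly_Mapping.lookup f (swap_exp i m)"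
    by (simp add: not_in_keys_iff_lookup_eq_zero)
  finally show ?thesis .
qed

lemma s_add: "s_op i (f + g) = s_op i f + s_op i g"
  by (simp add: s_mmap mmap_add)
lemma s_diff: "s_op i (f - g) = s_op i f - s_op i g"
  by (simp add: s_mmap mmap_diff)
lemma s_uminus: "s_op i (- g) = - s_op i g"
  by (simp add: s_mmap mmap_uminus)
lemma s_zero[simp]: "s_op i 0 = 0"
  by (simp add: s_mmap)
lemma s_mult: "s_op i (f * g) = s_op i f * s_op i g"
  by (simp add: s_mmap mmap_mult swap_add)
lemma s_one[simp]: "s_op i 1 = 1"
  by (simp add: s_mmap mmap_one)
lemma s_sum: "s_op i (sum F A) = (\<Sum>a\<in>A. s_op i (F a))"
  by (simp add: s_mmap mmap_sum)
lemma s_s[simp]: "s_op i (s_op i f) = f"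
  by (rule poly_mapping_eqI) (simp add: lookup_s)
lemma s_single: "s_op i (Poly_Mapping.single m c) = Poly_Mapping.single (swap_exp i m) c"
  by (simp add: s_mmap mmap_single)
lemma s_const[simp]: "s_op i (const c) = const c"
  by (simp add: const_def s_single)
lemma s_xvar: "s_op i (xvar j) = xvar (tr i j)"
  by (simp add: xvar_def s_single swap_single)
lemma s_xinv: "s_op i (xinv j) = xinv (tr i j)"
  by (simp add: xinv_def s_single swap_single)
lemma s_xvar_simps[simp]:
  "s_op i (xvar i) = xvar (Suc i)" "s_op i (xvar (Suc i)) = xvar i"
  "j \<noteq> i \<Longrightarrow> j \<noteq> Suc i \<Longrightarrow> s_op i (xvar j) = xvar j"
  "s_op i (xinv i) = xinv (Suc i)" "s_op i (xinv (Suc i)) = xinv i"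
  "j \<noteq> i \<Longrightarrow> j \<noteq> Suc i \<Longrightarrow> s_op i (xinv j) = xinv j"
  by (simp_all add: s_xvar s_xinv tr_def)

lemma s_inj: "s_op i f = s_op i g \<longleftrightarrow> f = g"
  by (metis s_s)

lemma tau_mmap: "tau_op k = mmap (\<lambda>m. m) (\<lambda>m. qq powi Poly_Mapping.lookup m k)"
  by (rule ext) (simp add: tau_op_def mmap_def)

lemma tau_add: "tau_op k (f + g) = tau_op k f + tau_op k g"
  by (simp add: tau_mmap mmap_add)
lemma tau_diff: "tau_op k (f - g) = tau_op k f - tau_op k g"
  by (simp add: tau_mmap mmap_diff)
lemma tau_mult: "tau_op k (f * g) = tau_op k f * tau_op k g"
  by (simp add: tau_mmap mmap_mult lookup_add power_int_add qq_nz)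
lemma tau_single: "tau_op k (Poly_Mapping.single m c) = Poly_Mapping.single m (qq powi Poly_Mapping.lookup m k * c)"
  by (simp add: tau_mmap mmap_single)
lemma tau_const[simp]: "tau_op k (const c) = const c"
  by (simp add: const_def tau_single)
lemma tau_xvar: "tau_op k (xvar j) = (if j = k then const qq * xvar j else xvar j)"
  by (auto simp: xvar_def tau_single const_def mult_single lookup_single)

lemma lookup_tau: "Poly_Mapping.lookup (tau_op k f) m = qq powi Poly_Mapping.lookup m k * Poly_Mapping.lookup f m"
proof -
  have "Poly_Mapping.lookup (tau_op k f) m = (\<Sum>j\<in>Poly_Mapping.keys f. if j = m then qq powi Poly_Mapping.lookup m k * Poly_Mapping.lookup f j else 0)"
    unfolding tau_op_def lookup_sum lookup_single when_def
    by (rule sum.cong) (auto)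
  also have "\<dots> = qq powi Poly_Mapping.lookup m k * Poly_Mapping.lookup f m"
    by (simp add: not_in_keys_iff_lookup_eq_zero)
  finally show ?thesis .
qed

lemma xvar_xinv: "xvar i * xinv i = 1"
  by (simp add: xvar_def xinv_def mult_single single_add[symmetric])

lemma xvar_inj: "xvar i = xvar j \<longleftrightarrow> i = j"
  by (metis lookup_single_eq xvar_def one_neq_zero lookup_single_not_eq)


section \<open>Divisibility and the operator T\<close>

definition dd :: "nat \<Rightarrow> lp" where "dd i = xvar i - xvar (Suc i)"
definition aa :: "nat \<Rightarrow> lp" where "aa i = const tt * xvar i - xvar (Suc i)"
definition bb :: "nat \<Rightarrow> lp" where "bb i = const (1 - tt) * xvar (Suc i)"

lemma xvar_diff_nz: "a \<noteq> b \<Longrightarrow> xvar a - xvar b \<noteq> 0"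
  by (simp add: xvar_inj)

lemma dd_nz: "dd i \<noteq> 0"
  unfolding dd_def by (rule xvar_diff_nz) simp

definition mon :: "nat \<Rightarrow> int \<Rightarrow> lp" where
  "mon i k = Poly_Mapping.single (Poly_Mapping.single i k) 1"

lemma mon_add: "mon i (a + b) = mon i a * mon i b"
  by (simp add: mon_def mult_single single_add)

lemma mon_zero: "mon i 0 = 1"
  by (simp add: mon_def)

lemma mon_nat: "mon i (int n) = xvar i ^ n"
proof (induction n)
  case 0 then show ?case by (simp add: mon_zero)
next
  case (Suc n)
  have "mon i (int (Suc n)) = mon i (int n) * mon i 1" by (simp add: mon_add[symmetric] add.commute)
  then show ?case using Suc by (simp add: mon_def xvar_def mult.commute)
qed

lemma dvd_pow_diff: "(x::'a::comm_ring_1) - y dvd x ^ n - y ^ n"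
  by (metis dvd_triv_left power_diff_sumr2)

lemma dd_dvd_mon: "dd i dvd mon i k - mon (Suc i) k"
proof (cases "k \<ge> 0")
  case True
  then obtain n where "k = int n" by (intro that[of "nat k"]) simp
  then show ?thesis unfolding mon_nat dd_def by (simp only: mon_nat dvd_pow_diff)
next
  case False
  then obtain n where k: "k = - int n" by (intro that[of "nat (- k)"]) simp
  have e: "mon j k * mon j (int n) = 1" for j unfolding k by (simp add: mon_add[symmetric] mon_zero)
  have X: "mon i k - mon (Suc i) k = - (mon i k * mon (Suc i) k) * (mon i (int n) - mon (Suc i) (int n))"
  proof -
    have "- (mon i k * mon (Suc i) k) * (mon i (int n) - mon (Suc i) (int n))
      = mon (Suc i) k * (mon i k * mon (Suc i) (int n)) - mon i k * (mon (Suc i) k * mon i (int n))"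
      by (simp add: algebra_simps)
    also have "\<dots> = mon i k - mon (Suc i) k"
    proof -
      have h1: "mon (Suc i) k * (mon i k * mon (Suc i) (int n)) = mon i k * (mon (Suc i) k * mon (Suc i) (int n))"
        by (rule mult.left_commute)
      have h2: "mon i k * (mon (Suc i) k * mon i (int n)) = mon (Suc i) k * (mon i k * mon i (int n))"
        by (rule mult.left_commute)
      show ?thesis unfolding h1 h2 e by simp
    qed
    finally show ?thesis by simp
  qed
  have "dd i dvd mon i (int n) - mon (Suc i) (int n)"
    unfolding mon_nat dd_def by (rule dvd_pow_diff)
  then show ?thesis unfolding X by (rule dvd_mult)
qed

lemma dd_dvd_single: "dd i dvd s_op i (Poly_Mapping.single m c) - Poly_Mapping.single m c"
proof -
  define a where "a = Poly_Mapping.lookup m i"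
  define b where "b = Poly_Mapping.lookup m (Suc i)"
  define m0 where "m0 = m - Poly_Mapping.single i a - Poly_Mapping.single (Suc i) b"
  have m: "m = m0 + Poly_Mapping.single i a + Poly_Mapping.single (Suc i) b"
    by (simp add: m0_def)
  have sm: "swap_exp i m = m0 + Poly_Mapping.single i b + Poly_Mapping.single (Suc i) a"
    by (rule poly_mapping_eqI)
       (simp add: m0_def a_def b_def lookup_swap lookup_add lookup_minus lookup_single when_def tr_def)
  have e1: "Poly_Mapping.single m c = Poly_Mapping.single m0 c * mon i a * mon (Suc i) b"
    by (subst m) (simp add: mon_def mult_single)
  have e2: "s_op i (Poly_Mapping.single m c) = Poly_Mapping.single m0 c * mon i b * mon (Suc i) a"
    by (simp add: s_single sm mon_def mult_single)
  have "mon i b * mon (Suc i) a - mon i a * mon (Suc i) b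
      = (mon i a * mon (Suc i) a) * (mon i (b - a) - mon (Suc i) (b - a))"
  proof -
    have "mon i b = mon i a * mon i (b - a)" "mon (Suc i) b = mon (Suc i) a * mon (Suc i) (b - a)"
      by (simp_all add: mon_add[symmetric])
    then show ?thesis by (simp add: algebra_simps)
  qed
  note H = this
  have "s_op i (Poly_Mapping.single m c) - Poly_Mapping.single m c
     = Poly_Mapping.single m0 c * (mon i b * mon (Suc i) a - mon i a * mon (Suc i) b)"
    by (simp only: e2) (simp add: e1 algebra_simps)
  also have "\<dots> = Poly_Mapping.single m0 c * (mon i a * mon (Suc i) a) * (mon i (b - a) - mon (Suc i) (b - a))"
    unfolding H by (simp add: mult.assoc)
  finally have X: "s_op i (Poly_Mapping.single m c) - Poly_Mapping.single m c
     = Poly_Mapping.single m0 c * (mon i a * mon (Suc i) a) * (mon i (b - a) - mon (Suc i) (b - a))" .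
  show ?thesis unfolding X by (rule dvd_mult[OF dd_dvd_mon])
qed

lemma dd_dvd: "dd i dvd s_op i f - f"
proof -
  have "s_op i f - f = (\<Sum>k\<in>Poly_Mapping.keys f. s_op i (Poly_Mapping.single k (Poly_Mapping.lookup f k)) - Poly_Mapping.single k (Poly_Mapping.lookup f k))"
    by (subst (1 2) lp_expand[symmetric]) (simp add: s_sum sum_subtractf)
  also have "dd i dvd \<dots>" by (intro dvd_sum dd_dvd_single)
  finally show ?thesis .
qed

lemma T_ex1: "\<exists>!g. dd i * g = aa i * (s_op i f - f)"
proof -
  obtain k where k: "s_op i f - f = dd i * k" using dd_dvd by (metis dvdE)
  show ?thesis
  proof (rule ex1I[of _ "aa i * k"])
    show "dd i * (aa i * k) = aa i * (s_op i f - f)" by (simp add: k algebra_simps)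
    fix g assume "dd i * g = aa i * (s_op i f - f)"
    then show "g = aa i * k" using dd_nz[of i] by (simp add: k algebra_simps)
  qed
qed

lemma T_op_alt: "T_op i f = const tt * f + (THE g. dd i * g = aa i * (s_op i f - f))"
  by (simp add: T_op_def dd_def aa_def)

lemma T_char: "dd i * T_op i f = aa i * s_op i f + bb i * f"
proof -
  have "dd i * (THE g. dd i * g = aa i * (s_op i f - f)) = aa i * (s_op i f - f)"
    by (rule theI'[OF T_ex1])
  then have "dd i * T_op i f = const tt * dd i * f + aa i * (s_op i f - f)"
    by (simp add: T_op_alt algebra_simps)
  then show ?thesis
    by (simp add: dd_def aa_def bb_def const_diff algebra_simps)
qed

lemma T_unique: "dd i * h = aa i * s_op i f + bb i * f \<Longrightarrow> T_op i f = h"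
  using T_char[of i f] dd_nz[of i] by (metis mult_left_cancel)


lemma s_dd: "s_op i (dd i) = - dd i"
  by (simp add: dd_def s_diff)
lemma s_aa: "s_op i (aa i) = const tt * xvar (Suc i) - xvar i"
  by (simp add: aa_def s_diff s_mult)
lemma s_bb: "s_op i (bb i) = const (1 - tt) * xvar i"
  by (simp add: bb_def s_mult)

lemma T_add: "T_op i (f + g) = T_op i f + T_op i g"
  by (rule T_unique) (simp add: T_char s_add algebra_simps)

lemma T_sym_mult: "s_op i p = p \<Longrightarrow> T_op i (p * f) = p * T_op i f"
  by (rule T_unique) (simp add: T_char s_mult algebra_simps)

lemma T_const: "T_op i (const c * f) = const c * T_op i f"
  by (rule T_sym_mult) simp

lemma T_zero[simp]: "T_op i 0 = 0"
  using T_add[of i 0 0] by simp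

lemma T_uminus: "T_op i (- f) = - T_op i f"
  using T_add[of i f "-f"] by (simp add: eq_neg_iff_add_eq_0 add.commute)

lemma T_diff: "T_op i (f - g) = T_op i f - T_op i g"
  using T_add[of i f "-g"] by (simp add: T_uminus)

lemma T_sum: "T_op i (sum F A) = (\<Sum>a\<in>A. T_op i (F a))"
  by (induction A rule: infinite_finite_induct) (auto simp: T_add)

lemma s_T: "dd i * s_op i (T_op i f) = - (s_op i (aa i) * f + s_op i (bb i) * s_op i f)"
proof -
  have "s_op i (dd i * T_op i f) = s_op i (aa i * s_op i f + bb i * f)" by (simp add: T_char)
  then have "- dd i * s_op i (T_op i f) = s_op i (aa i) * f + s_op i (bb i) * s_op i f"
    by (simp add: s_mult s_add s_dd)
  then show ?thesis by (metis minus_minus mult_minus_left)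
qed

lemma hecke_poly:
  fixes X Y T F SF Tf STf :: "'a::comm_ring_1"
  assumes "(X - Y) * Tf = (T * X - Y) * SF + (1 - T) * Y * F"
    and "(X - Y) * STf = - ((T * Y - X) * F + (1 - T) * X * SF)"
  shows "(X - Y) * ((X - Y) * ((T - 1) * Tf + T * F)) = (X - Y) * ((T * X - Y) * STf + (1 - T) * Y * Tf)"
proof -
  have "(X - Y) * ((T * X - Y) * STf + (1 - T) * Y * Tf) = (T * X - Y) * ((X - Y) * STf) + (1 - T) * Y * ((X - Y) * Tf)"
    by (simp add: algebra_simps)
  also have "\<dots> = (T * X - Y) * (- ((T * Y - X) * F + (1 - T) * X * SF)) + (1 - T) * Y * ((T * X - Y) * SF + (1 - T) * Y * F)"
    by (simp only: assms)
  also have "\<dots> = (T - 1) * (X - Y) * ((T * X - Y) * SF + (1 - T) * Y * F) + T * (X - Y) * (X - Y) * F"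
    by (simp add: algebra_simps)
  also have "\<dots> = (X - Y) * ((X - Y) * ((T - 1) * Tf + T * F))"
    by (simp only: assms[symmetric]) (simp add: algebra_simps)
  finally show ?thesis by simp
qed

lemma T_T: "T_op i (T_op i f) = const (tt - 1) * T_op i f + const tt * f"
proof (rule T_unique, rule mult_left_cancel[OF dd_nz, THEN iffD1])
  have h1: "(xvar i - xvar (Suc i)) * T_op i f = (const tt * xvar i - xvar (Suc i)) * s_op i f + (1 - const tt) * xvar (Suc i) * f"
    using T_char[of i f] by (simp add: dd_def aa_def bb_def const_diff)
  have h2: "(xvar i - xvar (Suc i)) * s_op i (T_op i f) = - ((const tt * xvar (Suc i) - xvar i) * f + (1 - const tt) * xvar i * s_op i f)"
    using s_T[of i f] by (simp add: dd_def s_aa s_bb const_diff)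
  show "dd i * (dd i * (const (tt - 1) * T_op i f + const tt * f)) = dd i * (aa i * s_op i (T_op i f) + bb i * T_op i f)"
    using hecke_poly[OF h1 h2] by (simp add: dd_def aa_def bb_def const_diff)
qed

lemma inv_tt: "inverse tt * tt = 1"
  using tt_nz by simp

lemma const_assoc: "const a * (const b * f) = const (a * b) * f"
  by (simp add: const_mult mult.assoc)

lemma inv_tt_id1: "inverse tt - 1 + inverse tt * (tt - 1) = 0"
  using tt_nz by (simp add: field_simps)

lemma T_Tinv_aux: "const (inverse tt - 1) * T_op i f + const (inverse tt) * (const (tt - 1) * T_op i f + const tt * f) = f"
proof -
  have "const (inverse tt - 1) * T_op i f + const (inverse tt) * (const (tt - 1) * T_op i f + const tt * f)
     = const (inverse tt - 1 + inverse tt * (tt - 1)) * T_op i f + const (inverse tt * tt) * f"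
    by (simp add: distrib_left const_assoc const_add distrib_right add.assoc)
  also have "\<dots> = f" using tt_nz by (simp only: inv_tt_id1) simp
  finally show ?thesis .
qed

lemma T_Tinv: "T_op i (Tinv_op i f) = f"
  using T_Tinv_aux[of i f] by (simp add: Tinv_op_def T_add T_const T_T)

lemma Tinv_T: "Tinv_op i (T_op i f) = f"
  using T_Tinv_aux[of i f] by (simp add: Tinv_op_def T_T)

lemma Tinv_add: "Tinv_op i (f + g) = Tinv_op i f + Tinv_op i g"
  by (simp add: Tinv_op_def T_add algebra_simps)
lemma Tinv_sym_mult: assumes "s_op i p = p" shows "Tinv_op i (p * f) = p * Tinv_op i f"
  unfolding Tinv_op_def T_sym_mult[OF assms] by (simp add: algebra_simps)
lemma Tinv_const: "Tinv_op i (const c * f) = const c * Tinv_op i f"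
  by (rule Tinv_sym_mult) simp
lemma Tinv_zero[simp]: "Tinv_op i 0 = 0"
  by (simp add: Tinv_op_def)
lemma Tinv_diff: "Tinv_op i (f - g) = Tinv_op i f - Tinv_op i g"
  by (simp add: Tinv_op_def T_diff algebra_simps)
lemma Tinv_sum: "Tinv_op i (sum F A) = (\<Sum>a\<in>A. Tinv_op i (F a))"
  by (induction A rule: infinite_finite_induct) (auto simp: Tinv_add)

lemma tt_Tinv: "const tt * Tinv_op i f = const (1 - tt) * f + T_op i f"
proof -
  have "const tt * Tinv_op i f = const (tt * (inverse tt - 1)) * f + const (tt * inverse tt) * T_op i f"
    by (simp add: Tinv_op_def const_assoc distrib_left)
  moreover have "tt * (inverse tt - 1) = 1 - tt" "tt * inverse tt = 1" using tt_nz by (simp_all add: field_simps)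
  ultimately show ?thesis by simp
qed

lemma T_inj: "T_op i f = T_op i g \<Longrightarrow> f = g"
  by (metis Tinv_T)

lemma T_xinv_Suc: "T_op i (xinv (Suc i) * g) = const tt * (xinv i * Tinv_op i g)"
proof (rule T_unique, rule mult_left_cancel[of "xvar i", THEN iffD1])
  show "xvar i \<noteq> 0" by (metis xvar_xinv mult_zero_left zero_neq_one)
  have xi: "xvar i * xinv i = 1" and xs: "xvar (Suc i) * xinv (Suc i) = 1" by (simp_all add: xvar_xinv)
  have "const tt * Tinv_op i g = const (1 - tt) * g + T_op i g" by (rule tt_Tinv)
  then have e: "const tt * Tinv_op i g = (1 - const tt) * g + T_op i g" by (simp add: const_diff)
  have c: "dd i * T_op i g = aa i * s_op i g + bb i * g" by (rule T_char)
  show "xvar i * (dd i * (const tt * (xinv i * Tinv_op i g))) =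
        xvar i * (aa i * s_op i (xinv (Suc i) * g) + bb i * (xinv (Suc i) * g))"
    using xi xs e c unfolding dd_def aa_def bb_def const_diff
    by (simp add: s_mult) algebra
qed

lemma T_xinv_other: "j \<noteq> i \<Longrightarrow> j \<noteq> Suc i \<Longrightarrow> T_op i (xinv j * g) = xinv j * T_op i g"
  by (rule T_sym_mult) simp


definition far :: "nat \<Rightarrow> nat \<Rightarrow> bool" where "far i j \<longleftrightarrow> Suc i < j \<or> Suc j < i"

lemma far_sym: "far i j \<Longrightarrow> far j i"
  by (auto simp: far_def)

lemma s_s_far: "far i j \<Longrightarrow> s_op i (s_op j f) = s_op j (s_op i f)"
proof (rule poly_mapping_eqI)
  fix m assume "far i j"
  have "swap_exp j (swap_exp i m) = swap_exp i (swap_exp j m)"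
    by (rule poly_mapping_eqI) (use \<open>far i j\<close> in \<open>auto simp: lookup_swap tr_def far_def\<close>)
  then show "Poly_Mapping.lookup (s_op i (s_op j f)) m = Poly_Mapping.lookup (s_op j (s_op i f)) m"
    by (simp add: lookup_s)
qed

lemma s_braid: "s_op i (s_op (Suc i) (s_op i f)) = s_op (Suc i) (s_op i (s_op (Suc i) f))"
proof (rule poly_mapping_eqI)
  fix m
  have "swap_exp i (swap_exp (Suc i) (swap_exp i m)) = swap_exp (Suc i) (swap_exp i (swap_exp (Suc i) m))"
    by (rule poly_mapping_eqI) (auto simp: lookup_swap tr_def)
  then show "Poly_Mapping.lookup (s_op i (s_op (Suc i) (s_op i f))) m = Poly_Mapping.lookup (s_op (Suc i) (s_op i (s_op (Suc i) f))) m"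
    by (simp add: lookup_s)
qed

lemma s_far_fix: "far i j \<Longrightarrow> s_op j (dd i) = dd i \<and> s_op j (aa i) = aa i \<and> s_op j (bb i) = bb i"
  by (auto simp: far_def dd_def aa_def bb_def s_diff s_mult)

lemma s_T_far: assumes "far i j" shows "s_op j (T_op i f) = T_op i (s_op j f)"
proof -
  have "dd i * s_op j (T_op i f) = s_op j (dd i * T_op i f)"
    using s_far_fix[OF assms] by (simp add: s_mult)
  also have "\<dots> = aa i * s_op i (s_op j f) + bb i * s_op j f"
    using s_far_fix[OF assms] by (simp add: T_char s_add s_mult s_s_far[OF assms])
  finally show ?thesis by (rule T_unique[symmetric])
qed

lemma T_T_far: assumes "far i j" shows "T_op i (T_op j f) = T_op j (T_op i f)"
proof (rule T_unique)
  have fx: "s_op j (dd i) = dd i" "s_op j (aa i) = aa i" "s_op j (bb i) = bb i"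
    using s_far_fix[OF assms] by auto
  have "dd i * T_op j (T_op i f) = T_op j (dd i * T_op i f)"
    by (simp add: T_sym_mult fx)
  also have "\<dots> = aa i * T_op j (s_op i f) + bb i * T_op j f"
    by (simp add: T_char T_add T_sym_mult fx)
  also have "\<dots> = aa i * s_op i (T_op j f) + bb i * T_op j f"
    using s_T_far[OF far_sym[OF assms], of f] by simp
  finally show "dd i * T_op j (T_op i f) = aa i * s_op i (T_op j f) + bb i * T_op j f" .
qed

lemma T_Tinv_far: assumes "far i j" shows "T_op i (Tinv_op j f) = Tinv_op j (T_op i f)"
  by (simp add: Tinv_op_def T_add T_const T_T_far[OF assms])

lemma Tinv_T_far: "far i j \<Longrightarrow> Tinv_op i (T_op j f) = T_op j (Tinv_op i f)"
  by (metis T_Tinv_far far_sym)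

lemma Tinv_Tinv_far: assumes "far i j" shows "Tinv_op i (Tinv_op j f) = Tinv_op j (Tinv_op i f)"
  by (simp add: Tinv_op_def T_add T_const T_T_far[OF assms]) (simp add: algebra_simps)

section \<open>Embedding into the fraction field\<close>

definition emb :: "lp \<Rightarrow> lp fract" where "emb x = Fract x 1"

lemma emb_add: "emb (a + b) = emb a + emb b" by (simp add: emb_def)
lemma emb_diff: "emb (a - b) = emb a - emb b" by (simp add: emb_def)
lemma emb_mult: "emb (a * b) = emb a * emb b" by (simp add: emb_def)
lemma emb_uminus: "emb (- a) = - emb a" by (simp add: emb_def)
lemma emb_one: "emb 1 = 1" by (simp add: emb_def fract_collapse)
lemma emb_zero: "emb 0 = 0" by (simp add: emb_def fract_collapse)
lemma emb_inj: "emb a = emb b \<longleftrightarrow> a = b" by (simp add: emb_def eq_fract)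
lemma emb_nz: "emb a \<noteq> 0 \<longleftrightarrow> a \<noteq> 0" using emb_inj[of a 0] by (simp add: emb_zero)

lemmas emb_simps = emb_add emb_diff emb_mult emb_uminus emb_one emb_zero

lemma emb_T: "emb (T_op k f) = (emb (aa k) * emb (s_op k f) + emb (bb k) * emb f) / emb (dd k)"
proof -
  have "emb (dd k) * emb (T_op k f) = emb (aa k) * emb (s_op k f) + emb (bb k) * emb f"
    using arg_cong[OF T_char[of k f], of emb] by (simp add: emb_simps)
  then show ?thesis using dd_nz[of k] emb_nz by (simp add: field_simps)
qed

lemma emb_sT: assumes "s_op m (dd k) \<noteq> 0"
  shows "emb (s_op m (T_op k f)) = (emb (s_op m (aa k)) * emb (s_op m (s_op k f)) + emb (s_op m (bb k)) * emb (s_op m f)) / emb (s_op m (dd k))"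
proof -
  have "emb (s_op m (dd k)) * emb (s_op m (T_op k f)) = emb (s_op m (aa k)) * emb (s_op m (s_op k f)) + emb (s_op m (bb k)) * emb (s_op m f)"
    using arg_cong[OF T_char[of k f], of "\<lambda>x. emb (s_op m x)"] by (simp add: emb_simps s_add s_mult)
  then show ?thesis using assms emb_nz by (simp add: field_simps)
qed

lemma emb_ssT: assumes "s_op m (s_op m' (dd k)) \<noteq> 0"
  shows "emb (s_op m (s_op m' (T_op k f))) = (emb (s_op m (s_op m' (aa k))) * emb (s_op m (s_op m' (s_op k f))) + emb (s_op m (s_op m' (bb k))) * emb (s_op m (s_op m' f))) / emb (s_op m (s_op m' (dd k)))"
proof -
  have "emb (s_op m (s_op m' (dd k))) * emb (s_op m (s_op m' (T_op k f))) = emb (s_op m (s_op m' (aa k))) * emb (s_op m (s_op m' (s_op k f))) + emb (s_op m (s_op m' (bb k))) * emb (s_op m (s_op m' f))"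
    using arg_cong[OF T_char[of k f], of "\<lambda>x. emb (s_op m (s_op m' x))"] by (simp add: emb_simps s_add s_mult)
  then show ?thesis using assms emb_nz by (simp add: field_simps)
qed

lemma braid_field:
  fixes X Y Z T F A B AB BA C :: "'a::field"
  assumes "X \<noteq> Y" "Y \<noteq> Z" "X \<noteq> Z"
  shows "((T * X - Y) * ((T * X - Z) * ((T * Y - Z) * C + (1 - T) * Z * AB) / (Y - Z) + (1 - T) * Z * ((T * Y - X) * F + (1 - T) * X * A) / (Y - X)) / (X - Z) + (1 - T) * Y * ((T * Y - Z) * ((T * X - Z) * BA + (1 - T) * Z * B) / (X - Z) + (1 - T) * Z * ((T * X - Y) * A + (1 - T) * Y * F) / (X - Y)) / (Y - Z)) / (X - Y) = ((T * Y - Z) * ((T * X - Z) * ((T * X - Y) * C + (1 - T) * Y * BA) / (X - Y) + (1 - T) * Z * ((T * Z - Y) * F + (1 - T) * Y * B) / (Z - Y)) / (X - Z) + (1 - T) * Z * ((T * X - Y) * ((T * X - Z) * AB + (1 - T) * Z * A) / (X - Z) + (1 - T) * Y * ((T * Y - Z) * B + (1 - T) * Z * F) / (Y - Z)) / (X - Y)) / (Y - Z)"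
proof -
  have "X - Y \<noteq> 0" "Y - Z \<noteq> 0" "X - Z \<noteq> 0" "Y - X \<noteq> 0" "Z - Y \<noteq> 0" "Z - X \<noteq> 0" using assms by auto
  then show ?thesis by (simp add: divide_simps) (simp add: algebra_simps)
qed
lemma T_braid: "T_op i (T_op (Suc i) (T_op i f)) = T_op (Suc i) (T_op i (T_op (Suc i) f))"
  apply (simp only: emb_inj[symmetric])
  apply (simp add: emb_T emb_sT emb_ssT aa_def bb_def dd_def s_diff s_mult const_diff emb_simps s_braid xvar_inj)
  apply (rule braid_field)
  apply (simp_all add: emb_inj xvar_inj)
  done

section \<open>Omega\<close>

definition rho :: "nat \<Rightarrow> nat \<Rightarrow> nat" where
  "rho n j = (if 2 \<le> j \<and> j \<le> n then j - 1 else if j = 1 \<and> 2 \<le> n then n else j)"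

lemma rho_step: "1 \<le> n \<Longrightarrow> tr n (rho n j) = rho (Suc n) j"
  by (auto simp: tr_def rho_def)

lemma rho_1: "rho 1 j = j" "rho 0 j = j" "rho (Suc 0) j = j"
  by (auto simp: rho_def)

lemma upt_Suc_1: "1 \<le> n \<Longrightarrow> [1..<Suc n] = [1..<n] @ [n]"
  by simp

lemma lookup_foldr_swap: "Poly_Mapping.lookup (foldr swap_exp [1..<n] m) j = Poly_Mapping.lookup m (rho n j)"
proof (induction n arbitrary: m)
  case 0 then show ?case by (simp add: rho_1)
next
  case (Suc n)
  show ?case
  proof (cases "n = 0")
    case True then show ?thesis by (simp add: rho_1)
  next
    case False
    then have "foldr swap_exp [1..<Suc n] m = foldr swap_exp [1..<n] (swap_exp n m)"
      by (simp add: upt_Suc_1)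
    then show ?thesis using Suc False by (simp add: lookup_swap rho_step)
  qed
qed

lemma lookup_fold_s: "Poly_Mapping.lookup (fold s_op [1..<n] f) m = Poly_Mapping.lookup f (foldr swap_exp [1..<n] m)"
proof (induction n arbitrary: m)
  case 0 then show ?case by simp
next
  case (Suc n)
  show ?case
  proof (cases "n = 0")
    case True then show ?thesis by simp
  next
    case False
    then show ?thesis using Suc by (simp add: upt_Suc_1 lookup_s)
  qed
qed

lemma fold_s_xvar: "fold s_op [1..<n] (xvar j) = xvar (rho n j)"
proof (induction n)
  case 0 then show ?case by (simp add: rho_1)
next
  case (Suc n)
  show ?case
  proof (cases "n = 0")
    case True then show ?thesis by (simp add: rho_1)
  next
    case False
    then show ?thesis using Suc by (simp add: upt_Suc_1 s_xvar rho_step)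
  qed
qed

lemmas lookup_foldr_swap' = lookup_foldr_swap[unfolded One_nat_def]
lemmas lookup_fold_s' = lookup_fold_s[unfolded One_nat_def]
lemmas fold_s_xvar' = fold_s_xvar[unfolded One_nat_def]

lemma fold_s_add: "fold s_op xs (f + g) = fold s_op xs f + fold s_op xs g"
  by (induction xs arbitrary: f g) (simp_all add: s_add)
lemma fold_s_diff: "fold s_op xs (f - g) = fold s_op xs f - fold s_op xs g"
  by (induction xs arbitrary: f g) (simp_all add: s_diff)
lemma fold_s_mult: "fold s_op xs (f * g) = fold s_op xs f * fold s_op xs g"
  by (induction xs arbitrary: f g) (simp_all add: s_mult)
lemma fold_s_const: "fold s_op xs (const c) = const c"
  by (induction xs) simp_all

lemma omega_add: "omega_op n (f + g) = omega_op n f + omega_op n g"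
  by (simp add: omega_op_def tau_add fold_s_add)
lemma omega_diff: "omega_op n (f - g) = omega_op n f - omega_op n g"
  by (simp add: omega_op_def tau_diff fold_s_diff)
lemma omega_mult: "omega_op n (f * g) = omega_op n f * omega_op n g"
  by (simp add: omega_op_def tau_mult fold_s_mult)
lemma omega_const: "omega_op n (const c * f) = const c * omega_op n f"
  by (simp only: omega_mult) (simp add: omega_op_def fold_s_const)
lemma omega_zero[simp]: "omega_op n 0 = 0"
  using omega_diff[of n 0 0] by simp
lemma omega_sum: "omega_op n (sum F A) = (\<Sum>a\<in>A. omega_op n (F a))"
  by (induction A rule: infinite_finite_induct) (auto simp: omega_add)

lemma omega_xvar: "2 \<le> j \<Longrightarrow> j \<le> n \<Longrightarrow> omega_op n (xvar j) = xvar (j - 1)"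
  by (simp add: omega_op_def tau_xvar fold_s_xvar fold_s_xvar' rho_def)

lemma omega_s:
  assumes "1 \<le> k" "k + 2 \<le> n"
  shows "omega_op n (s_op (Suc k) f) = s_op k (omega_op n f)"
proof (rule poly_mapping_eqI)
  fix m
  have r: "rho n (tr (Suc k) j) = tr k (rho n j)" for j
    using assms by (auto simp: rho_def tr_def)
  have e1: "swap_exp (Suc k) (foldr swap_exp [1..<n] m) = foldr swap_exp [1..<n] (swap_exp k m)"
    by (rule poly_mapping_eqI) (simp add: lookup_swap lookup_foldr_swap lookup_foldr_swap' r)
  have e2: "Poly_Mapping.lookup (foldr swap_exp [1..<n] (swap_exp k m)) 1 = Poly_Mapping.lookup (foldr swap_exp [1..<n] m) 1"
    using assms by (simp add: lookup_foldr_swap lookup_foldr_swap' lookup_swap rho_def tr_def)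
  show "Poly_Mapping.lookup (omega_op n (s_op (Suc k) f)) m = Poly_Mapping.lookup (s_op k (omega_op n f)) m"
    unfolding omega_op_def by (simp add: lookup_fold_s lookup_fold_s' lookup_tau lookup_s e1[unfolded One_nat_def] e2[unfolded One_nat_def])
qed

lemma omega_T:
  assumes "1 \<le> k" "k + 2 \<le> n"
  shows "omega_op n (T_op (Suc k) f) = T_op k (omega_op n f)"
proof -
  have x1: "omega_op n (xvar (Suc k)) = xvar k" and x2: "omega_op n (xvar (Suc (Suc k))) = xvar (Suc k)"
    using assms by (simp_all add: omega_xvar)
  have od: "omega_op n (dd (Suc k)) = dd k" "omega_op n (aa (Suc k)) = aa k" "omega_op n (bb (Suc k)) = bb k"
    by (simp_all add: dd_def aa_def bb_def omega_diff omega_const x1 x2)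
  have "dd k * omega_op n (T_op (Suc k) f) = omega_op n (dd (Suc k) * T_op (Suc k) f)"
    by (simp add: omega_mult od)
  also have "\<dots> = aa k * s_op k (omega_op n f) + bb k * omega_op n f"
    by (simp add: T_char omega_add omega_mult od omega_s[OF assms])
  finally show ?thesis by (rule T_unique[symmetric])
qed

lemma br1: "T_op (Suc a) (Tinv_op a (Tinv_op (Suc a) W)) = Tinv_op a (Tinv_op (Suc a) (T_op a W))"
proof -
  define V where "V = Tinv_op a (Tinv_op (Suc a) W)"
  have W: "W = T_op (Suc a) (T_op a V)" by (simp add: V_def T_Tinv)
  show ?thesis by (simp only: W) (simp add: Tinv_T T_braid)
qed

lemma br2: "T_op a (Tinv_op (Suc a) (Tinv_op a W)) = Tinv_op (Suc a) (Tinv_op a (T_op (Suc a) W))"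
proof -
  define V where "V = Tinv_op (Suc a) (Tinv_op a W)"
  have W: "W = T_op a (T_op (Suc a) V)" by (simp add: V_def T_Tinv)
  show ?thesis by (simp only: W) (simp add: Tinv_T T_braid[symmetric])
qed

lemma br3: "Tinv_op a (Tinv_op (Suc a) (Tinv_op a W)) = Tinv_op (Suc a) (Tinv_op a (Tinv_op (Suc a) W))"
proof -
  define V where "V = Tinv_op a (Tinv_op (Suc a) (Tinv_op a W))"
  have W1: "W = T_op a (T_op (Suc a) (T_op a V))" by (simp add: V_def T_Tinv)
  then have W2: "W = T_op (Suc a) (T_op a (T_op (Suc a) V))" by (simp add: T_braid)
  have "Tinv_op (Suc a) (Tinv_op a (Tinv_op (Suc a) W)) = V"
    by (subst W2) (simp add: Tinv_T)
  then show ?thesis by (simp add: V_def)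
qed

lemma foldr_T_far: "(\<forall>k\<in>set xs. far i k) \<Longrightarrow> T_op i (foldr T_op xs g) = foldr T_op xs (T_op i g)"
  by (induction xs arbitrary: g) (simp_all add: T_T_far)

lemma foldr_Tinv_far: "(\<forall>k\<in>set xs. far i k) \<Longrightarrow> T_op i (foldr Tinv_op xs g) = foldr Tinv_op xs (T_op i g)"
  by (induction xs arbitrary: g) (simp_all add: T_Tinv_far)

lemma foldr_Tinv_const: "foldr Tinv_op xs (const c * g) = const c * foldr Tinv_op xs g"
  by (induction xs arbitrary: g) (simp_all add: Tinv_const)

lemma foldr_Tinv_zero[simp]: "foldr Tinv_op xs 0 = 0"
  by (induction xs) simp_all

lemma foldr_Tinv_add: "foldr Tinv_op xs (f + g) = foldr Tinv_op xs f + foldr Tinv_op xs g"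
  by (induction xs arbitrary: f g) (simp_all add: Tinv_add)

lemma foldr_Tinv_sum: "foldr Tinv_op xs (sum F A) = (\<Sum>a\<in>A. foldr Tinv_op xs (F a))"
  by (induction A rule: infinite_finite_induct) (auto simp: foldr_Tinv_add)

lemma foldr_T_const: "foldr T_op xs (const c * g) = const c * foldr T_op xs g"
  by (induction xs arbitrary: g) (simp_all add: T_const)

lemma upt_split3: "a \<le> b \<Longrightarrow> Suc b < c \<Longrightarrow> [a..<c] = [a..<b] @ b # Suc b # [Suc (Suc b)..<c]"
proof -
  assume a: "a \<le> b" "Suc b < c"
  have "[a..<c] = [a..<b] @ [b..<b + (c - b)]" using a upt_add_eq_append[of a b "c - b"] by simp
  also have "b + (c - b) = c" using a by simp
  also have "[b..<c] = b # [Suc b..<c]" using a by (intro upt_conv_Cons) auto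
  also have "[Suc b..<c] = Suc b # [Suc (Suc b)..<c]" using a by (intro upt_conv_Cons) auto
  finally show ?thesis .
qed


definition Phi :: "nat \<Rightarrow> nat \<Rightarrow> lp \<Rightarrow> lp" where
  "Phi n i g = g + const (inverse tt - 1) * (\<Sum>j = i + 1..n. const (tt ^ (j - i)) * Tij_inv i j g)"

lemma D_alt: "D_op n i f = xinv i * (f - const (tt ^ (n - 1)) * Phi n i (Y_op n i f))"
  by (simp add: D_op_def Phi_def)

lemma Tij_first: "Tij_inv i (Suc i) g = Tinv_op i g"
  by (simp add: Tij_inv_def)

lemma Tij_rec: assumes "Suc i < j" shows "Tij_inv i j g = Tinv_op i (Tij_inv (Suc i) j (Tinv_op i g))"
proof -
  have "[i..<j] = i # [Suc i..<j]" using assms by (simp add: upt_conv_Cons)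
  moreover have "[i..<j - 1] = i # [Suc i..<j - 1]" using assms by (simp add: upt_conv_Cons)
  ultimately show ?thesis by (simp add: Tij_inv_def)
qed

lemma Tij_const: "Tij_inv i j (const c * g) = const c * Tij_inv i j g"
  by (simp add: Tij_inv_def foldr_Tinv_const)

lemma Phi_const: "Phi n i (const c * g) = const c * Phi n i g"
proof -
  have "(\<Sum>j = i + 1..n. const (tt ^ (j - i)) * Tij_inv i j (const c * g)) = const c * (\<Sum>j = i + 1..n. const (tt ^ (j - i)) * Tij_inv i j g)"
    by (simp add: Tij_const sum_distrib_left mult.left_commute)
  then show ?thesis by (simp add: Phi_def algebra_simps)
qed

lemma Phi_T: assumes "i < n" shows "Phi n i (T_op i h) = const tt * Tinv_op i (Phi n (Suc i) h)"
proof -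
  define S where "S h' = (\<Sum>j = Suc (Suc i)..n. const (tt ^ (j - Suc i)) * Tij_inv (Suc i) j h')" for h'
  have set: "{Suc i..n} = insert (Suc i) {Suc (Suc i)..n}" using assms by auto
  have sum: "(\<Sum>j = Suc i..n. const (tt ^ (j - i)) * Tij_inv i j g) = const tt * Tinv_op i g + const tt * Tinv_op i (S (Tinv_op i g))" for g
  proof -
    have "(\<Sum>j = Suc i..n. const (tt ^ (j - i)) * Tij_inv i j g) = const (tt ^ (Suc i - i)) * Tij_inv i (Suc i) g + (\<Sum>j = Suc (Suc i)..n. const (tt ^ (j - i)) * Tij_inv i j g)"
      unfolding set by (simp add: sum.insert)
    also have "(\<Sum>j = Suc (Suc i)..n. const (tt ^ (j - i)) * Tij_inv i j g) = (\<Sum>j = Suc (Suc i)..n. const tt * Tinv_op i (const (tt ^ (j - Suc i)) * Tij_inv (Suc i) j (Tinv_op i g)))"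
    proof (rule sum.cong[OF refl])
      fix j assume "j \<in> {Suc (Suc i)..n}"
      then have j: "Suc i < j" by simp
      then have "tt ^ (j - i) = tt * tt ^ (j - Suc i)" by (simp add: Suc_diff_Suc[symmetric] del: Suc_diff_Suc)
      then show "const (tt ^ (j - i)) * Tij_inv i j g = const tt * Tinv_op i (const (tt ^ (j - Suc i)) * Tij_inv (Suc i) j (Tinv_op i g))"
        by (simp add: Tij_rec[OF j] Tinv_const const_mult mult.assoc)
    qed
    also have "\<dots> = const tt * Tinv_op i (S (Tinv_op i g))"
      by (simp add: S_def Tinv_sum sum_distrib_left)
    finally show ?thesis by (simp add: Tij_first)
  qed
  have sum': "(\<Sum>j = i + 1..n. const (tt ^ (j - i)) * Tij_inv i j g) = const tt * Tinv_op i g + const tt * Tinv_op i (S (Tinv_op i g))" for g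
    using sum[of g] by simp
  have P2: "Phi n (Suc i) h = h + const (inverse tt - 1) * S h"
    by (simp add: Phi_def S_def)
  have "(inverse tt - 1) * tt = 1 - tt" using tt_nz by (simp add: field_simps)
  then have c: "const (inverse tt - 1) * const tt = const (1 - tt)"
    by (simp add: const_mult[symmetric])
  have "Phi n i (T_op i h) = T_op i h + const (inverse tt - 1) * const tt * h + const (inverse tt - 1) * const tt * Tinv_op i (S h)"
    unfolding Phi_def sum' Tinv_T by (simp add: algebra_simps)
  also have "\<dots> = T_op i h + const (1 - tt) * h + const tt * const (inverse tt - 1) * Tinv_op i (S h)"
    by (simp only: c mult.commute[of "const tt" "const (inverse tt - 1)"])
  also have "\<dots> = const tt * Tinv_op i (Phi n (Suc i) h)"
    by (simp only: P2 Tinv_add Tinv_const distrib_left tt_Tinv) (simp add: algebra_simps)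
  finally show ?thesis .
qed

lemma powi_aux: "inverse tt * tt powi (int (Suc i) - int n) = tt powi (int i - int n)"
proof -
  have "int (Suc i) - int n = (int i - int n) + 1" by simp
  moreover have "tt powi ((int i - int n) + 1) = tt powi (int i - int n) * tt"
    using tt_nz by (rule power_int_add_1[OF disjI1])
  ultimately have "tt powi (int (Suc i) - int n) = tt powi (int i - int n) * tt"
    by (metis (no_types))
  then show ?thesis using tt_nz by (simp add: field_simps)
qed

lemma Y_Tinv: assumes "1 \<le> i" "i < n"
  shows "Y_op n i (Tinv_op i f) = const (inverse tt) * T_op i (Y_op n (Suc i) f)"
proof -
  have l1: "foldr Tinv_op [1..<Suc i] f = foldr Tinv_op [1..<i] (Tinv_op i f)"
    using assms by (simp only: upt_Suc_1) simp
  have l2: "[i..<n] = i # [Suc i..<n]" using assms by (simp add: upt_conv_Cons)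
  have "Y_op n i (Tinv_op i f) = const (tt powi (int i - int n)) * T_op i (foldr T_op [Suc i..<n] (omega_op n (foldr Tinv_op [1..<Suc i] f)))"
    unfolding Y_op_def l1 l2 by simp
  also have "\<dots> = const (inverse tt) * T_op i (Y_op n (Suc i) f)"
    unfolding Y_op_def by (simp only: T_const mult.assoc[symmetric] const_mult[symmetric] powi_aux)
  finally show ?thesis .
qed

section \<open>The first two relations\<close>

lemma rel1: assumes "1 \<le> i" "i < n"
  shows "T_op i (D_op n (Suc i) f) = const tt * D_op n i (Tinv_op i f)"
proof -
  have "Phi n i (Y_op n i (Tinv_op i f)) = Phi n i (const (inverse tt) * T_op i (Y_op n (Suc i) f))"
    by (simp only: Y_Tinv[OF assms])
  also have "\<dots> = const (inverse tt) * (const tt * Tinv_op i (Phi n (Suc i) (Y_op n (Suc i) f)))"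
    by (simp only: Phi_const Phi_T[OF assms(2)])
  also have "\<dots> = Tinv_op i (Phi n (Suc i) (Y_op n (Suc i) f))"
    using tt_nz by (simp only: mult.assoc[symmetric] const_mult[symmetric]) simp
  finally have e: "Phi n i (Y_op n i (Tinv_op i f)) = Tinv_op i (Phi n (Suc i) (Y_op n (Suc i) f))" .
  show ?thesis
    by (simp only: D_alt T_xinv_Suc Tinv_diff Tinv_const e)
qed

lemma rel2: assumes "1 \<le> i" "i < n"
  shows "T_op i (D_op n i f) = D_op n (Suc i) (T_op i f) + const (tt - 1) * D_op n i f"
proof -
  define h where "h = D_op n (Suc i) (T_op i f)"
  have th: "T_op i h = const tt * D_op n i f"
    using rel1[OF assms, of "T_op i f"] unfolding h_def Tinv_T .
  have ii: "const (inverse tt) * const tt = 1" using tt_nz by (simp add: const_mult[symmetric])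
  have e: "D_op n i f = const (inverse tt) * T_op i h"
    unfolding th mult.assoc[symmetric] ii by simp
  have "T_op i (D_op n i f) = const (inverse tt) * (const (tt - 1) * T_op i h + const tt * h)"
    by (simp only: e T_const T_T)
  also have "\<dots> = const (tt - 1) * (const (inverse tt) * T_op i h) + (const (inverse tt) * const tt) * h"
    by (simp add: algebra_simps)
  also have "\<dots> = h + const (tt - 1) * D_op n i f"
    unfolding ii e[symmetric] by simp
  finally show ?thesis by (simp add: h_def)
qed


section \<open>Commutation with Y\<close>

lemma T_Y_comm:
  assumes "1 \<le> i" "i < n" "1 \<le> j" "j \<le> n" "j \<noteq> i" "j \<noteq> Suc i"
  shows "T_op i (Y_op n j g) = Y_op n j (T_op i g)"
proof -
  have key: "T_op i (foldr T_op [j..<n] (omega_op n (foldr Tinv_op [1..<j] g))) = foldr T_op [j..<n] (omega_op n (foldr Tinv_op [1..<j] (T_op i g)))"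
  proof (cases "Suc i < j")
    case True
    have far1: "\<forall>k\<in>set [j..<n]. far i k" using True by (auto simp: far_def)
    have om: "T_op i (omega_op n V) = omega_op n (T_op (Suc i) V)" for V
      using omega_T[of i n V] True assms by simp
    have split: "[1..<j] = [1..<i] @ i # Suc i # [Suc (Suc i)..<j]" using assms True by (intro upt_split3) auto
    have far2: "\<forall>k\<in>set [1..<i]. far (Suc i) k" by (auto simp: far_def)
    have far3: "\<forall>k\<in>set [Suc (Suc i)..<j]. far i k" by (auto simp: far_def)
    have "T_op (Suc i) (foldr Tinv_op [1..<j] g) = foldr Tinv_op [1..<j] (T_op i g)"
      by (simp only: split foldr_append foldr_Cons comp_apply foldr_Tinv_far[OF far2] br1 foldr_Tinv_far[OF far3])
    then show ?thesis by (simp only: foldr_T_far[OF far1] om)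
  next
    case False
    then have ji: "j < i" using assms by auto
    then obtain p where p: "i = Suc p" by (cases i) auto
    have jp: "j \<le> p" "1 \<le> p" using ji assms p by auto
    have split: "[j..<n] = [j..<p] @ p # Suc p # [Suc (Suc p)..<n]" using jp assms p by (intro upt_split3) auto
    have far1: "\<forall>k\<in>set [j..<p]. far (Suc p) k" by (auto simp: far_def)
    have far2: "\<forall>k\<in>set [Suc (Suc p)..<n]. far p k" by (auto simp: far_def)
    have far3: "\<forall>k\<in>set [1..<j]. far (Suc p) k" using jp by (auto simp: far_def)
    have om: "T_op p (omega_op n V) = omega_op n (T_op (Suc p) V)" for V
      using omega_T[of p n V] jp assms p by simp
    show ?thesis unfolding p
      by (simp only: split foldr_append foldr_Cons comp_apply foldr_T_far[OF far1] T_braid[symmetric]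
          foldr_T_far[OF far2] om foldr_Tinv_far[OF far3])
  qed
  show ?thesis unfolding Y_op_def by (simp only: T_const key)
qed

lemma Tij_far: "(\<forall>x\<in>set ([j..<k] @ rev [j..<k - 1]). far i x) \<Longrightarrow> T_op i (Tij_inv j k g) = Tij_inv j k (T_op i g)"
  unfolding Tij_inv_def by (rule foldr_Tinv_far)

lemma Tij_high: "Suc i < j \<Longrightarrow> T_op i (Tij_inv j k g) = Tij_inv j k (T_op i g)"
  by (rule Tij_far) (auto simp: far_def)

lemma Tij_low: "k \<le> p \<Longrightarrow> T_op (Suc p) (Tij_inv j k g) = Tij_inv j k (T_op (Suc p) g)"
  by (rule Tij_far) (auto simp: far_def)

lemma Tij_mid: assumes "j \<le> p" "Suc (Suc p) < k"
  shows "T_op (Suc p) (Tij_inv j k g) = Tij_inv j k (T_op (Suc p) g)"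
proof -
  have s1: "[j..<k] = [j..<p] @ p # Suc p # [Suc (Suc p)..<k]" using assms by (intro upt_split3) auto
  have s2: "[j..<k - 1] = [j..<p] @ p # Suc p # [Suc (Suc p)..<k - 1]" using assms by (intro upt_split3) auto
  have L: "Tij_inv j k g' = foldr Tinv_op [j..<p] (Tinv_op p (Tinv_op (Suc p) (foldr Tinv_op ([Suc (Suc p)..<k] @ rev [Suc (Suc p)..<k - 1]) (Tinv_op (Suc p) (Tinv_op p (foldr Tinv_op (rev [j..<p]) g'))))))" for g'
    unfolding Tij_inv_def s1 s2 by simp
  have f1: "\<forall>x\<in>set [j..<p]. far (Suc p) x" by (auto simp: far_def)
  have f2: "\<forall>x\<in>set ([Suc (Suc p)..<k] @ rev [Suc (Suc p)..<k - 1]). far p x" by (auto simp: far_def)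
  have f3: "\<forall>x\<in>set (rev [j..<p]). far (Suc p) x" by (auto simp: far_def)
  show ?thesis
    by (simp only: L foldr_Tinv_far[OF f1] br1 foldr_Tinv_far[OF f2] br2 foldr_Tinv_far[OF f3])
qed

lemma pair_id: "T_op (Suc p) (Tinv_op p V) + const tt * T_op (Suc p) (Tinv_op p (Tinv_op (Suc p) (Tinv_op p V)))
  = Tinv_op p (T_op (Suc p) V) + const tt * Tinv_op p (Tinv_op (Suc p) (Tinv_op p (T_op (Suc p) V)))"
proof -
  have a: "T_op (Suc p) (Tinv_op p (Tinv_op (Suc p) (Tinv_op p V))) = Tinv_op p (Tinv_op (Suc p) V)"
    by (simp only: br1 T_Tinv)
  have b: "Tinv_op p (Tinv_op (Suc p) (Tinv_op p (T_op (Suc p) V))) = Tinv_op (Suc p) (Tinv_op p V)"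
    by (simp only: br3 Tinv_T)
  have "const tt * Tinv_op p (Tinv_op (Suc p) V) = Tinv_op p (const tt * Tinv_op (Suc p) V)"
    by (rule Tinv_const[symmetric])
  also have "\<dots> = Tinv_op p (const (1 - tt) * V + T_op (Suc p) V)"
    by (simp only: tt_Tinv)
  also have "\<dots> = const (1 - tt) * Tinv_op p V + Tinv_op p (T_op (Suc p) V)"
    by (simp only: Tinv_add Tinv_const)
  finally have c1: "const tt * Tinv_op p (Tinv_op (Suc p) V) = const (1 - tt) * Tinv_op p V + Tinv_op p (T_op (Suc p) V)" .
  have c2: "const tt * Tinv_op (Suc p) (Tinv_op p V) = const (1 - tt) * Tinv_op p V + T_op (Suc p) (Tinv_op p V)"
    by (rule tt_Tinv)
  show ?thesis unfolding a b c1 c2 by (simp add: algebra_simps)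
qed

lemma sum_pair:
  fixes A :: "nat set" and F G :: "nat \<Rightarrow> lp"
  assumes "finite A" "a \<in> A" "b \<in> A" "a \<noteq> b"
    "\<And>k. k \<in> A \<Longrightarrow> k \<noteq> a \<Longrightarrow> k \<noteq> b \<Longrightarrow> F k = G k" "F a + F b = G a + G b"
  shows "sum F A = (sum G A :: lp)"
proof -
  have r: "sum H A = H a + H b + sum H (A - {a} - {b})" for H :: "nat \<Rightarrow> lp"
    using assms(1-4) by (simp add: sum.remove[of A a] sum.remove[of "A - {a}" b] add.assoc)
  have "sum F (A - {a} - {b}) = sum G (A - {a} - {b})"
    by (rule sum.cong) (auto intro: assms(5))
  then show ?thesis by (simp only: r assms(6))
qed

lemma T_Phi_comm:
  assumes "1 \<le> i" "i < n" "1 \<le> j" "j \<le> n" "j \<noteq> i" "j \<noteq> Suc i"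
  shows "T_op i (Phi n j g) = Phi n j (T_op i g)"
proof -
  have key: "(\<Sum>k = j + 1..n. const (tt ^ (k - j)) * T_op i (Tij_inv j k g)) = (\<Sum>k = j + 1..n. const (tt ^ (k - j)) * Tij_inv j k (T_op i g))"
  proof (cases "Suc i < j")
    case True
    then show ?thesis by (intro sum.cong refl) (simp add: Tij_high)
  next
    case False
    then have ji: "j < i" using assms by auto
    then obtain p where p: "i = Suc p" by (cases i) auto
    have jp: "j \<le> p" using ji p by auto
    define P where "P = foldr Tinv_op [j..<p]"
    define P' where "P' = foldr Tinv_op (rev [j..<p])"
    have e1: "Tij_inv j (Suc p) g' = P (Tinv_op p (P' g'))" for g'
      using jp by (simp add: Tij_inv_def P_def P'_def)
    have e2: "Tij_inv j (Suc (Suc p)) g' = P (Tinv_op p (Tinv_op (Suc p) (Tinv_op p (P' g'))))" for g'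
      using jp by (simp add: Tij_inv_def P_def P'_def)
    have fP: "T_op (Suc p) (P X) = P (T_op (Suc p) X)" for X
      unfolding P_def by (rule foldr_Tinv_far) (auto simp: far_def)
    have fP': "T_op (Suc p) (P' X) = P' (T_op (Suc p) X)" for X
      unfolding P'_def by (rule foldr_Tinv_far) (auto simp: far_def)
    have Plin: "P X + const c * P Y = P (X + const c * Y)" for X Y c
      by (simp add: P_def foldr_Tinv_add foldr_Tinv_const)
    have pw: "const (tt ^ (Suc (Suc p) - j)) = const (tt ^ (Suc p - j)) * const tt"
      using jp by (simp add: const_mult[symmetric] Suc_diff_le mult_ac)
    show ?thesis unfolding p
    proof (rule sum_pair[where a = "Suc p" and b = "Suc (Suc p)"])
      show "finite {j + 1..n}" by simp
      show "Suc p \<in> {j + 1..n}" "Suc (Suc p) \<in> {j + 1..n}" "Suc p \<noteq> Suc (Suc p)"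
        using jp assms p by auto
    next
      fix k assume k: "k \<in> {j + 1..n}" "k \<noteq> Suc p" "k \<noteq> Suc (Suc p)"
      show "const (tt ^ (k - j)) * T_op (Suc p) (Tij_inv j k g) = const (tt ^ (k - j)) * Tij_inv j k (T_op (Suc p) g)"
      proof (cases "k \<le> p")
        case True then show ?thesis by (simp add: Tij_low)
      next
        case False
        then have "Suc (Suc p) < k" using k by auto
        then show ?thesis by (simp add: Tij_mid[OF jp])
      qed
    next
      let ?V = "P' g"
      have "const (tt ^ (Suc p - j)) * T_op (Suc p) (Tij_inv j (Suc p) g) + const (tt ^ (Suc (Suc p) - j)) * T_op (Suc p) (Tij_inv j (Suc (Suc p)) g)
          = const (tt ^ (Suc p - j)) * P (T_op (Suc p) (Tinv_op p ?V) + const tt * T_op (Suc p) (Tinv_op p (Tinv_op (Suc p) (Tinv_op p ?V))))"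
        by (simp only: e1 e2 pw fP Plin[symmetric]) (simp add: algebra_simps)
      also have "\<dots> = const (tt ^ (Suc p - j)) * P (Tinv_op p (T_op (Suc p) ?V) + const tt * Tinv_op p (Tinv_op (Suc p) (Tinv_op p (T_op (Suc p) ?V))))"
        by (simp only: pair_id)
      also have "\<dots> = const (tt ^ (Suc p - j)) * Tij_inv j (Suc p) (T_op (Suc p) g) + const (tt ^ (Suc (Suc p) - j)) * Tij_inv j (Suc (Suc p)) (T_op (Suc p) g)"
        by (simp only: e1 e2 pw fP' Plin[symmetric]) (simp add: algebra_simps)
      finally show "const (tt ^ (Suc p - j)) * T_op (Suc p) (Tij_inv j (Suc p) g) + const (tt ^ (Suc (Suc p) - j)) * T_op (Suc p) (Tij_inv j (Suc (Suc p)) g)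
          = const (tt ^ (Suc p - j)) * Tij_inv j (Suc p) (T_op (Suc p) g) + const (tt ^ (Suc (Suc p) - j)) * Tij_inv j (Suc (Suc p)) (T_op (Suc p) g)" .
    qed
  qed
  show ?thesis
    unfolding Phi_def by (simp only: T_add T_const T_sum key)
qed

lemma rel3:
  assumes "1 \<le> i" "i < n" "1 \<le> j" "j \<le> n" "j \<noteq> i" "j \<noteq> Suc i"
  shows "T_op i (D_op n j f) = D_op n j (T_op i f)"
  unfolding D_alt
  by (simp only: T_xinv_other[OF assms(5,6)] T_diff T_const T_Phi_comm[OF assms] T_Y_comm[OF assms])

theorem lemma3p1:
  fixes n :: nat
  assumes "n \<ge> 2"
  shows "\<forall>f \<in> laurent_in n. \<forall>i \<in> {1..n - 1}.
           T_op i (D_op n (i + 1) f) = const tt * D_op n i (Tinv_op i f)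
         \<and> T_op i (D_op n i f) = D_op n (i + 1) (T_op i f) + const (tt - 1) * D_op n i f
         \<and> (\<forall>j \<in> {1..n}. j \<noteq> i \<longrightarrow> j \<noteq> i + 1 \<longrightarrow> T_op i (D_op n j f) = D_op n j (T_op i f))"
proof (intro ballI conjI impI)
  fix f i assume i: "i \<in> {1..n - 1}"
  then have i1: "1 \<le> i" "i < n" using assms by auto
  show "T_op i (D_op n (i + 1) f) = const tt * D_op n i (Tinv_op i f)"
    using rel1[OF i1, of f] by simp
  show "T_op i (D_op n i f) = D_op n (i + 1) (T_op i f) + const (tt - 1) * D_op n i f"
    using rel2[OF i1, of f] by simp
  fix j assume "j \<in> {1..n}" "j \<noteq> i" "j \<noteq> i + 1"
  then show "T_op i (D_op n j f) = D_op n j (T_op i f)"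
    using rel3[OF i1, of j f] by simp
qed

end
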